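(* Let $\Omega\subset\mathbb{R}^d$ be a bounded domain, $\kappa\in L^\infty(\Omega)$ with $\kappa\ge\kappa_0>0$, $a(u,v)=\int_\Omega\kappa\nabla u\cdot\nabla v\,dx$, $\|u\|_a^2=a(u,u)$. Let $V_{H,1},V_{H,2}\subset H^1_0(\Omega)$ be finite-dimensional, $L^2(\Omega)$-orthogonal subspaces, $\tau>0$, $N\ge2$. Let $u_{H,1}^n\in V_{H,1}$, $u_{H,2}^n\in V_{H,2}$ ($n=0,\dots,N$) satisfy for $n=1,\dots,N-1$ the scheme $$(u_{H,1}^{n+1}-2u_{H,1}^n+u_{H,1}^{n-1},w)+\frac{\tau^2}{2}a(u_{H,1}^{n+1}+u_{H,1}^{n-1}+2u_{H,2}^n,w)=0\quad\forall w\in V_{H,1},$$ $$(u_{H,2}^{n+1}-2u_{H,2}^n+u_{H,2}^{n-1},w)+\frac{\tau^2}{2}a(u_{H,1}^{n+1}+u_{H,1}^{n-1}+2u_{H,2}^n,w)=0\quad\forall w\in V_{H,2}.$$ Define $(u,v)_{m_\tau}=(u,v)+\frac{\tau^2}{2}a(u,v)$, $\|v\|_{m_\tau}^2=(v,v)_{m_\tau}$; operators $b_\tau:V_{H,1}\to V_{H,1}$, $c_\tau,d_\tau:V_{H,1}+V_{H,2}\to V_{H,1}$ by $(b_\tau(v_1),v)_{m_\tau}=(v_1,v)$, $(c_\tau(u),v)_{m_\tau}=\frac{\tau^2}{2}a(u,v)$, $a(d_\tau(u),v)=a(u,v)$ for all $v\in V_{H,1}$; $\|v_1\|_{s_\tau}^2=\|v_1\|^2-\|b_\tau(v_1)\|_{m_\tau}^2$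 for $v_1\in V_{H,1}$; and $\|v_2\|_{n_\tau}^2=\frac{\tau^2}{2}\|v_2\|_a^2-\|c_\tau(v_2)\|_{m_\tau}^2-\|d_\tau(v_2)\|_{s_\tau}^2$ for $v_2\in V_{H,2}$. Let $$E^{n+\frac12}=\|b_\tau(u_{H,1}^{n+1})-c_\tau(u_{H,2}^{n+1})-b_\tau(u_{H,1}^n)+c_\tau(u_{H,2}^n)\|_{m_\tau}^2+\|u_{H,2}^{n+1}-u_{H,2}^n\|^2-\frac{\tau^2}{2}\|u_{H,2}^{n+1}-u_{H,2}^n\|_a^2$$ $$+\|u_{H,1}^{n+1}+d_\tau(u_{H,2}^{n+1})\|_{s_\tau}^2+\|u_{H,2}^{n+1}\|_{n_\tau}^2+\|u_{H,1}^n+d_\tau(u_{H,2}^n)\|_{s_\tau}^2+\|u_{H,2}^n\|_{n_\tau}^2.$$ Then $E^{n+\frac12}=E^{n-\frac12}$ for $n=1,\dots,N-1$, and the scheme is stable provided $\sup_{v\in V_{H,2}}\frac{\|v\|_a^2}{\|v\|^2}\le\frac{2}{\tau^2}$: in that case each of the terms in $E^{n+\frac12}$ (grouping $\|u_{H,2}^{n+1}-u_{H,2}^n\|^2-\frac{\tau^2}{2}\|u_{H,2}^{n+1}-u_{H,2}^n\|_a^2$ as one term) is nonnegative and hence bounded by $E^{\frac12}$ for all $n=0,\dots,N-1$.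
   Context: $(\cdot,\cdot)$ and $\|\cdot\|$ denote the $L^2(\Omega)$ inner product and norm. The scheme is the $\omega=0$ variant of the partially explicit splitting for the wave equation $u_{tt}=\nabla\cdot(\kappa\nabla u)$ with homogeneous Dirichlet boundary conditions, written under $L^2$-orthogonality of $V_{H,1}$ and $V_{H,2}$. *)

theory Defs
  imports "HOL-Analysis.Analysis"
begin

text \<open>Abstract setting: the type 'a stands for H^1_0(Omega) equipped with the
L^2(Omega) inner product (inner, norm); a is the energy bilinear form
a(u,v) = int kappa grad u . grad v.\<close>

definition mt_inner :: "('a::real_inner \<Rightarrow> 'a \<Rightarrow> real) \<Rightarrow> real \<Rightarrow> 'a \<Rightarrow> 'a \<Rightarrow> real" where
  "mt_inner a \<tau> u v = inner u v + \<tau>^2 / 2 * a u v"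

definition mt_norm2 :: "('a::real_inner \<Rightarrow> 'a \<Rightarrow> real) \<Rightarrow> real \<Rightarrow> 'a \<Rightarrow> real" where
  "mt_norm2 a \<tau> v = mt_inner a \<tau> v v"

definition b_op :: "('a::real_inner \<Rightarrow> 'a \<Rightarrow> real) \<Rightarrow> real \<Rightarrow> 'a set \<Rightarrow> 'a \<Rightarrow> 'a" where
  "b_op a \<tau> V1 v1 = (THE b. b \<in> V1 \<and> (\<forall>v\<in>V1. mt_inner a \<tau> b v = inner v1 v))"

definition c_op :: "('a::real_inner \<Rightarrow> 'a \<Rightarrow> real) \<Rightarrow> real \<Rightarrow> 'a set \<Rightarrow> 'a \<Rightarrow> 'a" where
  "c_op a \<tau> V1 u = (THE c. c \<in> V1 \<and> (\<forall>v\<in>V1. mt_inner a \<tau> c v = \<tau>^2 / 2 * a u v))"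

definition d_op :: "('a::real_inner \<Rightarrow> 'a \<Rightarrow> real) \<Rightarrow> 'a set \<Rightarrow> 'a \<Rightarrow> 'a" where
  "d_op a V1 u = (THE d. d \<in> V1 \<and> (\<forall>v\<in>V1. a d v = a u v))"

definition s_norm2 :: "('a::real_inner \<Rightarrow> 'a \<Rightarrow> real) \<Rightarrow> real \<Rightarrow> 'a set \<Rightarrow> 'a \<Rightarrow> real" where
  "s_norm2 a \<tau> V1 v1 = (norm v1)^2 - mt_norm2 a \<tau> (b_op a \<tau> V1 v1)"

definition n_norm2 :: "('a::real_inner \<Rightarrow> 'a \<Rightarrow> real) \<Rightarrow> real \<Rightarrow> 'a set \<Rightarrow> 'a \<Rightarrow> real" where
  "n_norm2 a \<tau> V1 v2 = \<tau>^2 / 2 * a v2 v2 - mt_norm2 a \<tau> (c_op a \<tau> V1 v2)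
      - s_norm2 a \<tau> V1 (d_op a V1 v2)"

definition E_terms :: "('a::real_inner \<Rightarrow> 'a \<Rightarrow> real) \<Rightarrow> real \<Rightarrow> 'a set \<Rightarrow> (nat \<Rightarrow> 'a) \<Rightarrow> (nat \<Rightarrow> 'a) \<Rightarrow> nat \<Rightarrow> real list" where
  "E_terms a \<tau> V1 u1 u2 n =
    [ mt_norm2 a \<tau> (b_op a \<tau> V1 (u1 (n+1)) - c_op a \<tau> V1 (u2 (n+1))
                    - b_op a \<tau> V1 (u1 n) + c_op a \<tau> V1 (u2 n)),
      (norm (u2 (n+1) - u2 n))^2 - \<tau>^2 / 2 * a (u2 (n+1) - u2 n) (u2 (n+1) - u2 n),
      s_norm2 a \<tau> V1 (u1 (n+1) + d_op a V1 (u2 (n+1))),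
      n_norm2 a \<tau> V1 (u2 (n+1)),
      s_norm2 a \<tau> V1 (u1 n + d_op a V1 (u2 n)),
      n_norm2 a \<tau> V1 (u2 n) ]"

definition energy :: "('a::real_inner \<Rightarrow> 'a \<Rightarrow> real) \<Rightarrow> real \<Rightarrow> 'a set \<Rightarrow> (nat \<Rightarrow> 'a) \<Rightarrow> (nat \<Rightarrow> 'a) \<Rightarrow> nat \<Rightarrow> real" where
  "energy a \<tau> V1 u1 u2 n = sum_list (E_terms a \<tau> V1 u1 u2 n)"

end

theory Submission imports Defs begin

lemma gs_exists:
  fixes g :: "'a::real_vector \<Rightarrow> 'a \<Rightarrow> real"
  assumes bil: "bilinear g" and sym: "\<And>u v. g u v = g v u"
    and pos: "\<And>v. v \<noteq> 0 \<Longrightarrow> g v v > 0" and fin: "finite B"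
  shows "\<exists>C. finite C \<and> span C = span B \<and> 0 \<notin> C \<and> (\<forall>x\<in>C. \<forall>y\<in>C. x \<noteq> y \<longrightarrow> g x y = 0)"
  using fin
proof (induction B rule: finite_induct)
  case empty
  then show ?case by (intro exI[of _ "{}"]) auto
next
  case (insert x B)
  then obtain C where C: "finite C" "span C = span B" "0 \<notin> C"
    "\<forall>x\<in>C. \<forall>y\<in>C. x \<noteq> y \<longrightarrow> g x y = 0" by blast
  define x' where "x' = x - (\<Sum>c\<in>C. (g x c / g c c) *\<^sub>R c)"
  have orth: "g x' c0 = 0" if "c0 \<in> C" for c0
  proof -
    have "g (\<Sum>c\<in>C. (g x c / g c c) *\<^sub>R c) c0 = (\<Sum>c\<in>C. (g x c / g c c) * g c c0)"
    proof -
      have "linear (\<lambda>y. g y c0)" using bil by (simp add: bilinear_def)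
      then show ?thesis by (simp add: linear_sum[of "\<lambda>y. g y c0"] bilinear_lmul[OF bil])
    qed
    also have "\<dots> = (\<Sum>c\<in>C. if c = c0 then g x c0 else 0)"
    proof (rule sum.cong[OF refl])
      fix c assume cC: "c \<in> C"
      show "g x c / g c c * g c c0 = (if c = c0 then g x c0 else 0)"
      proof (cases "c = c0")
        case True
        have "c0 \<noteq> 0" using C(3) that by auto
        then have "g c0 c0 > 0" using pos by blast
        then show ?thesis using True by simp
      next
        case False
        then show ?thesis using C(4) cC that by simp
      qed
    qed
    also have "\<dots> = g x c0" using C(1) that by simp
    finally show ?thesis unfolding x'_def using bil by (simp add: bilinear_lsub)
  qed
  have xx: "x - x' \<in> span C"
    unfolding x'_def by (simp add: span_sum span_scale span_base)
  have sp: "span (insert x B) = span (insert x C)"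
    using C(2) by (simp add: span_insert)
  show ?case
  proof (cases "x' = 0")
    case True
    then have "x \<in> span C" using xx by simp
    then have "span (insert x B) = span C" using sp span_redundant by metis
    then show ?thesis using C by metis
  next
    case False
    have "x' \<notin> C" using orth pos[OF False] by force
    have "span (insert x' C) = span (insert x B)"
      using sp eq_span_insert_eq[OF xx] by simp
    moreover have "\<forall>u\<in>insert x' C. \<forall>v\<in>insert x' C. u \<noteq> v \<longrightarrow> g u v = 0"
      using C(4) orth sym by auto
    ultimately show ?thesis using C False by (intro exI[of _ "insert x' C"]) auto
  qed
qed

lemma riesz_exists:
  fixes g :: "'a::real_vector \<Rightarrow> 'a \<Rightarrow> real"
  assumes bil: "bilinear g" and sym: "\<And>u v. g u v = g v u"
    and pos: "\<And>v. v \<noteq> 0 \<Longrightarrow> g v v > 0" and fin: "finite B"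
    and V: "span B = V" and lf: "linear f"
  shows "\<exists>r\<in>V. \<forall>v\<in>V. g r v = f v"
proof -
  obtain C where C: "finite C" "span C = V" "0 \<notin> C"
    "\<forall>x\<in>C. \<forall>y\<in>C. x \<noteq> y \<longrightarrow> g x y = 0"
    using gs_exists[OF bil sym pos fin] V by blast
  define r where "r = (\<Sum>c\<in>C. (f c / g c c) *\<^sub>R c)"
  have rV: "r \<in> V" unfolding r_def C(2)[symmetric] by (intro span_sum span_scale span_base)
  have eqC: "g r c0 = f c0" if "c0 \<in> C" for c0
  proof -
    have "g r c0 = (\<Sum>c\<in>C. (f c / g c c) * g c c0)"
    proof -
      have "linear (\<lambda>y. g y c0)" using bil by (simp add: bilinear_def)
      then show ?thesis unfolding r_def by (simp add: linear_sum[of "\<lambda>y. g y c0"] bilinear_lmul[OF bil])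
    qed
    also have "\<dots> = (\<Sum>c\<in>C. if c = c0 then f c0 else 0)"
    proof (rule sum.cong[OF refl])
      fix c assume cC: "c \<in> C"
      show "f c / g c c * g c c0 = (if c = c0 then f c0 else 0)"
      proof (cases "c = c0")
        case True
        have "c0 \<noteq> 0" using C(3) that by auto
        then have "g c0 c0 > 0" using pos by blast
        then show ?thesis using True by simp
      next
        case False
        then show ?thesis using C(4) cC that by simp
      qed
    qed
    also have "\<dots> = f c0" using C(1) that by simp
    finally show ?thesis .
  qed
  have lr: "linear (\<lambda>v. g r v)" using bil by (simp add: bilinear_def)
  have "\<forall>v\<in>V. g r v = f v"
  proof
    fix v assume "v \<in> V"
    then have "v \<in> span C" using C(2) by simp
    then show "g r v = f v" using linear_eq_on_span[OF lr lf] eqC by blast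
  qed
  then show ?thesis using rV by blast
qed

lemma repr_unique:
  fixes g :: "'a::real_vector \<Rightarrow> 'a \<Rightarrow> real"
  assumes bil: "bilinear g"
    and pos: "\<And>v. v \<noteq> 0 \<Longrightarrow> g v v > 0" and V: "subspace V"
    and r: "r \<in> V" and r': "r' \<in> V" and eq: "\<forall>v\<in>V. g r v = g r' v"
  shows "r = r'"
proof (rule ccontr)
  assume "r \<noteq> r'"
  then have "g (r - r') (r - r') > 0" using pos by simp
  moreover have "r - r' \<in> V" using V r r' by (simp add: subspace_diff)
  then have "g (r - r') (r - r') = 0" using eq bilinear_lsub[OF bil] by simp
  ultimately show False by simp
qed

lemma bilinear_mt:
  assumes "bilinear a"
  shows "bilinear (mt_inner a \<tau>)"
  unfolding bilinear_def mt_inner_def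
  using assms
  by (auto intro!: linearI simp: bilinear_ladd bilinear_radd bilinear_lmul bilinear_rmul
      inner_add_left inner_add_right algebra_simps)

locale ops =
  fixes a :: "'a::real_inner \<Rightarrow> 'a \<Rightarrow> real" and \<tau> :: real and V1 :: "'a set"
    and b c d :: "'a \<Rightarrow> 'a"
  assumes bil: "bilinear a" and sym: "\<And>u v. a u v = a v u"
    and pos: "\<And>v. v \<noteq> 0 \<Longrightarrow> a v v > 0"
    and V1: "subspace V1" and tau: "\<tau> > 0"
    and b_in: "\<And>u. b u \<in> V1" and b_eq: "\<And>u v. v \<in> V1 \<Longrightarrow> mt_inner a \<tau> (b u) v = inner u v"
    and c_in: "\<And>u. c u \<in> V1" and c_eq: "\<And>u v. v \<in> V1 \<Longrightarrow> mt_inner a \<tau> (c u) v = \<tau>^2/2 * a u v"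
    and d_in: "\<And>u. d u \<in> V1" and d_eq: "\<And>u v. v \<in> V1 \<Longrightarrow> a (d u) v = a u v"
begin

lemma a_simps:
  "a (x + y) z = a x z + a y z" "a x (y + z) = a x y + a x z"
  "a (x - y) z = a x z - a y z" "a x (y - z) = a x y - a x z"
  "a (r *\<^sub>R x) z = r * a x z" "a x (r *\<^sub>R z) = r * a x z"
  "a (- x) z = - a x z" "a x (- z) = - a x z" "a 0 z = 0" "a x 0 = 0"
  using bil by (simp_all add: bilinear_ladd bilinear_radd bilinear_lsub bilinear_rsub
      bilinear_lmul bilinear_rmul bilinear_lneg bilinear_rneg bilinear_lzero bilinear_rzero)

lemma a_nonneg: "a v v \<ge> 0"
  using pos[of v] a_simps(9) by (cases "v = 0") auto

lemma m_sym: "mt_inner a \<tau> u v = mt_inner a \<tau> v u"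
  unfolding mt_inner_def using sym by (simp add: inner_commute)

lemma m_pos: "v \<noteq> 0 \<Longrightarrow> mt_inner a \<tau> v v > 0"
  unfolding mt_inner_def using pos[of v] tau by (simp add: add_pos_pos)

lemma m_uniq:
  assumes "r \<in> V1" "r' \<in> V1" "\<And>v. v \<in> V1 \<Longrightarrow> mt_inner a \<tau> r v = mt_inner a \<tau> r' v"
  shows "r = r'"
  using repr_unique[OF bilinear_mt[OF bil] m_pos V1] assms by blast

lemma m_simps:
  "mt_inner a \<tau> (x + y) z = mt_inner a \<tau> x z + mt_inner a \<tau> y z"
  "mt_inner a \<tau> x (y + z) = mt_inner a \<tau> x y + mt_inner a \<tau> x z"
  "mt_inner a \<tau> (x - y) z = mt_inner a \<tau> x z - mt_inner a \<tau> y z"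
  "mt_inner a \<tau> x (y - z) = mt_inner a \<tau> x y - mt_inner a \<tau> x z"
  "mt_inner a \<tau> (r *\<^sub>R x) z = r * mt_inner a \<tau> x z"
  "mt_inner a \<tau> x (r *\<^sub>R z) = r * mt_inner a \<tau> x z"
  using bilinear_mt[OF bil, of \<tau>]
  by (simp_all add: bilinear_ladd bilinear_radd bilinear_lsub bilinear_rsub
      bilinear_lmul bilinear_rmul)

lemma m_self: "mt_inner a \<tau> v v = (norm v)^2 + \<tau>^2/2 * a v v"
  by (simp add: mt_inner_def power2_norm_eq_inner)

lemma s_nonneg: "(norm z)^2 - mt_inner a \<tau> (b z) (b z) \<ge> 0"
proof -
  have "mt_inner a \<tau> (b z) (b z) = inner z (b z)" using b_eq b_in by blast
  moreover have "(norm (z - b z))^2 \<ge> 0" by simp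
  moreover have "(norm (z - b z))^2 = (norm z)^2 - 2 * inner z (b z) + (norm (b z))^2"
    by (simp add: power2_norm_eq_inner inner_diff_left inner_diff_right inner_commute)
  moreover have "mt_inner a \<tau> (b z) (b z) \<ge> (norm (b z))^2"
    using m_self a_nonneg tau by simp
  ultimately show ?thesis by linarith
qed

lemma bd_facts:
  assumes x: "x \<in> V1"
  shows "b (x + d y) = b x + b (d y)" "c y = d y - b (d y)"
proof -
  let ?e = "d y" and ?h = "b (d y)"
  show "b (x + ?e) = b x + ?h"
  proof (rule m_uniq)
    show "b (x + ?e) \<in> V1" by (rule b_in)
    show "b x + ?h \<in> V1" using V1 b_in by (simp add: subspace_add)
    fix v assume "v \<in> V1"
    then show "mt_inner a \<tau> (b (x + ?e)) v = mt_inner a \<tau> (b x + ?h) v"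
      by (simp add: b_eq m_simps inner_add_left)
  qed
  show "c y = ?e - ?h"
  proof (rule m_uniq)
    show "c y \<in> V1" by (rule c_in)
    show "?e - ?h \<in> V1" using V1 b_in d_in by (simp add: subspace_diff)
    fix v assume "v \<in> V1"
    then have "mt_inner a \<tau> ?e v = inner ?e v + \<tau>^2/2 * a y v" using d_eq by (simp add: mt_inner_def)
    then show "mt_inner a \<tau> (c y) v = mt_inner a \<tau> (?e - ?h) v"
      using \<open>v \<in> V1\<close> by (simp add: b_eq c_eq m_simps)
  qed
qed

lemma n_formula:
  "\<tau>^2/2 * a y y - mt_inner a \<tau> (c y) (c y) - ((norm (d y))^2 - mt_inner a \<tau> (b (d y)) (b (d y)))
   = \<tau>^2/2 * (a y y - a (d y) (d y))"
proof -
  let ?e = "d y" and ?h = "b (d y)"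
  have q: "c y = ?e - ?h" using bd_facts[of 0] V1 by (simp add: subspace_0)
  have f1: "mt_inner a \<tau> ?h ?h = inner ?e ?h" using b_eq b_in by blast
  have f2: "mt_inner a \<tau> ?h ?e = inner ?e ?e" using b_eq d_in by blast
  have f3: "mt_inner a \<tau> ?e ?h = inner ?e ?e" using f2 m_sym by metis
  have f0: "mt_inner a \<tau> ?e ?e = inner ?e ?e + \<tau>^2/2 * a ?e ?e" by (simp add: mt_inner_def)
  show ?thesis unfolding q
    by (simp only: m_simps f0 f1 f2 f3) (simp add: power2_norm_eq_inner algebra_simps)
qed

lemma n_nonneg:
  "\<tau>^2/2 * a y y - mt_inner a \<tau> (c y) (c y) - ((norm (d y))^2 - mt_inner a \<tau> (b (d y)) (b (d y))) \<ge> 0"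
proof -
  have "a (y - d y) (y - d y) \<ge> 0" by (rule a_nonneg)
  moreover have "a (d y) (d y) = a y (d y)" using d_eq d_in by blast
  moreover have "a (d y) y = a y (d y)" using sym by blast
  ultimately have "a y y - a (d y) (d y) \<ge> 0" by (simp add: a_simps)
  then show ?thesis unfolding n_formula using tau by simp
qed

lemma S_formula:
  assumes x: "x \<in> V1"
  shows "(norm (x + d y))^2 - mt_inner a \<tau> (b (x + d y)) (b (x + d y))
     + (\<tau>^2/2 * a y y - mt_inner a \<tau> (c y) (c y) - ((norm (d y))^2 - mt_inner a \<tau> (b (d y)) (b (d y))))
     = (norm x)^2 - mt_inner a \<tau> (b x - c y) (b x - c y) + \<tau>^2/2 * a y y"
proof -
  let ?e = "d y" and ?h = "b (d y)"
  note p = bd_facts(1)[OF x, of y] and q = bd_facts(2)[OF x, of y]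
  have f1: "mt_inner a \<tau> ?h ?h = inner ?e ?h" using b_eq b_in by blast
  have f2: "mt_inner a \<tau> ?h ?e = inner ?e ?e" using b_eq d_in by blast
  have f3: "mt_inner a \<tau> ?e ?h = inner ?e ?e" using f2 m_sym by metis
  have f4: "mt_inner a \<tau> (b x) (b x) = inner x (b x)" using b_eq b_in by blast
  have f5: "mt_inner a \<tau> (b x) ?h = inner x ?h" using b_eq b_in by blast
  have f6: "mt_inner a \<tau> ?h (b x) = inner ?e (b x)" using b_eq b_in by blast
  have f7: "mt_inner a \<tau> (b x) ?e = inner x ?e" using b_eq d_in by blast
  have f8: "mt_inner a \<tau> ?e (b x) = inner x ?e" using f7 m_sym by metis
  have f9: "inner ?e (b x) = inner x ?h" using f5 f6 m_sym by metis
  have f10: "a (d y) (d y) = a y (d y)" using d_eq d_in by blast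
  have f0: "mt_inner a \<tau> ?e ?e = inner ?e ?e + \<tau>^2/2 * a ?e ?e" by (simp add: mt_inner_def)
  show ?thesis unfolding p q
    by (simp only: m_simps f0 f1 f2 f3 f4 f5 f6 f7 f8 f10)
      (simp add: f9 power2_norm_eq_inner inner_add_left inner_add_right inner_commute algebra_simps)
qed

definition F :: "'a \<Rightarrow> 'a \<Rightarrow> 'a \<Rightarrow> 'a \<Rightarrow> real" where
  "F x' x y' y = - 2 * mt_inner a \<tau> (b x' - c y') (b x - c y) + (norm (y' - y))^2
     + \<tau>^2 * a y' y + (norm x')^2 + (norm x)^2"

lemma terms_sum:
  assumes x: "x \<in> V1" and x': "x' \<in> V1"
  shows "mt_inner a \<tau> (b x' - c y' - b x + c y) (b x' - c y' - b x + c y)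
    + ((norm (y' - y))^2 - \<tau>^2/2 * a (y' - y) (y' - y))
    + ((norm (x' + d y'))^2 - mt_inner a \<tau> (b (x' + d y')) (b (x' + d y')))
    + (\<tau>^2/2 * a y' y' - mt_inner a \<tau> (c y') (c y') - ((norm (d y'))^2 - mt_inner a \<tau> (b (d y')) (b (d y'))))
    + ((norm (x + d y))^2 - mt_inner a \<tau> (b (x + d y)) (b (x + d y)))
    + (\<tau>^2/2 * a y y - mt_inner a \<tau> (c y) (c y) - ((norm (d y))^2 - mt_inner a \<tau> (b (d y)) (b (d y))))
    = F x' x y' y"
proof -
  have e: "b x' - c y' - b x + c y = (b x' - c y') - (b x - c y)" by simp
  have m2: "mt_inner a \<tau> ((b x' - c y') - (b x - c y)) ((b x' - c y') - (b x - c y))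
     = mt_inner a \<tau> (b x' - c y') (b x' - c y') - 2 * mt_inner a \<tau> (b x' - c y') (b x - c y)
       + mt_inner a \<tau> (b x - c y) (b x - c y)"
    unfolding m_simps using m_sym[of "b x" "b x'"] m_sym[of "c y" "c y'"] m_sym[of "c y" "b x'"] m_sym[of "b x" "c y'"]
      m_sym[of "c y'" "b x'"] m_sym[of "c y" "b x"]
    by (simp add: algebra_simps)
  have ay: "\<tau>^2/2 * a (y' - y) (y' - y) = \<tau>^2/2 * a y' y' - \<tau>^2 * a y' y + \<tau>^2/2 * a y y"
    by (simp add: a_simps sym[of y y'] algebra_simps)
  show ?thesis
    using S_formula[OF x, of y] S_formula[OF x', of y'] unfolding e m2 F_def ay
    by linarith
qed

lemma conserv:
  assumes x0: "x0 \<in> V1" and x1: "x1 \<in> V1" and x2: "x2 \<in> V1"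
    and s1: "\<And>w. w \<in> V1 \<Longrightarrow> inner (x2 - 2 *\<^sub>R x1 + x0) w + \<tau>^2/2 * a (x2 + x0 + 2 *\<^sub>R y1) w = 0"
    and s2: "inner (y2 - 2 *\<^sub>R y1 + y0) (y2 - y0) + \<tau>^2/2 * a (x2 + x0 + 2 *\<^sub>R y1) (y2 - y0) = 0"
  shows "F x2 x1 y2 y1 = F x1 x0 y1 y0"
proof -
  define \<beta> where "\<beta> = b x1 - c y1"
  have \<beta>V: "\<beta> \<in> V1" unfolding \<beta>_def using V1 b_in c_in by (simp add: subspace_diff)
  have R1: "x2 + x0 = 2 *\<^sub>R \<beta>"
  proof (rule m_uniq)
    show "x2 + x0 \<in> V1" using V1 x0 x2 by (simp add: subspace_add)
    show "2 *\<^sub>R \<beta> \<in> V1" using V1 \<beta>V by (simp add: subspace_scale)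
    fix v assume v: "v \<in> V1"
    have e1: "inner (x2 - 2 *\<^sub>R x1 + x0) v = inner (x2 + x0) v - 2 * inner x1 v"
      by (simp add: inner_add_left inner_diff_left)
    have e2: "a (x2 + x0 + 2 *\<^sub>R y1) v = a (x2 + x0) v + 2 * a y1 v"
      by (simp add: a_simps)
    have e3: "\<tau>^2/2 * (a (x2 + x0) v + 2 * a y1 v) = \<tau>^2/2 * a (x2 + x0) v + \<tau>^2 * a y1 v"
      by (simp add: algebra_simps)
    have H: "inner (x2 + x0) v + \<tau>^2/2 * a (x2 + x0) v = 2 * inner x1 v - \<tau>^2 * a y1 v"
      using s1[OF v] unfolding e1 e2 e3 by linarith
    have L: "mt_inner a \<tau> (x2 + x0) v = inner (x2 + x0) v + \<tau>^2/2 * a (x2 + x0) v"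
      by (simp add: mt_inner_def)
    have R: "mt_inner a \<tau> (2 *\<^sub>R \<beta>) v = 2 * inner x1 v - \<tau>^2 * a y1 v"
      unfolding \<beta>_def using v by (simp add: m_simps b_eq c_eq algebra_simps)
    show "mt_inner a \<tau> (x2 + x0) v = mt_inner a \<tau> (2 *\<^sub>R \<beta>) v"
      using H L R by linarith
  qed
  have M1: "mt_inner a \<tau> (b x2 - c y2) \<beta> = inner x2 \<beta> - \<tau>^2/2 * a y2 \<beta>"
    using \<beta>V by (simp add: m_simps b_eq c_eq)
  have M0: "mt_inner a \<tau> \<beta> (b x0 - c y0) = inner x0 \<beta> - \<tau>^2/2 * a y0 \<beta>"
    using \<beta>V m_sym[of \<beta>] by (simp add: m_simps b_eq c_eq)
  have S2: "inner (y2 - 2 *\<^sub>R y1 + y0) (y2 - y0) + \<tau>^2 * a (\<beta> + y1) (y2 - y0) = 0"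
  proof -
    have "x2 + x0 + 2 *\<^sub>R y1 = 2 *\<^sub>R (\<beta> + y1)" using R1 by (simp add: scaleR_add_right)
    then have E: "\<tau>^2/2 * a (x2 + x0 + 2 *\<^sub>R y1) (y2 - y0) = \<tau>^2 * a (\<beta> + y1) (y2 - y0)"
      by (simp only: a_simps(5))
    show ?thesis using s2 E by linarith
  qed
  have X: "2 * inner x2 \<beta> - 2 * inner x0 \<beta> = (norm x2)^2 - (norm x0)^2"
  proof -
    have "2 * inner x2 \<beta> - 2 * inner x0 \<beta> = inner x2 (2 *\<^sub>R \<beta>) - inner x0 (2 *\<^sub>R \<beta>)" by simp
    also have "\<dots> = inner x2 (x2 + x0) - inner x0 (x2 + x0)" using R1 by simp
    also have "\<dots> = (norm x2)^2 - (norm x0)^2"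
      by (simp add: inner_add_right power2_norm_eq_inner inner_commute)
    finally show ?thesis .
  qed
  have Y: "inner (y2 - 2 *\<^sub>R y1 + y0) (y2 - y0) = (norm (y2 - y1))^2 - (norm (y1 - y0))^2"
    by (simp add: power2_norm_eq_inner inner_add_left inner_add_right inner_diff_left inner_diff_right
        inner_commute algebra_simps)
  have A: "\<tau>^2 * a (\<beta> + y1) (y2 - y0) = \<tau>^2 * a y2 \<beta> - \<tau>^2 * a y0 \<beta> + \<tau>^2 * a y2 y1 - \<tau>^2 * a y1 y0"
    by (simp add: a_simps sym[of \<beta>] sym[of y1] algebra_simps)
  have h: "\<And>p q. - 2 * (p - \<tau>^2/2 * q) = - 2 * p + \<tau>^2 * q" by simp
  show ?thesis unfolding F_def \<beta>_def[symmetric] M1 M0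
    unfolding h using S2 X Y A by linarith
qed

end


lemma the_repr:
  fixes g :: "'a::real_vector \<Rightarrow> 'a \<Rightarrow> real"
  assumes bil: "bilinear g" and sym: "\<And>u v. g u v = g v u"
    and pos: "\<And>v. v \<noteq> 0 \<Longrightarrow> g v v > 0" and V: "subspace V"
    and fin: "\<exists>B. finite B \<and> span B = V" and lf: "linear f"
  shows "(THE r. r \<in> V \<and> (\<forall>v\<in>V. g r v = f v)) \<in> V \<and>
         (\<forall>v\<in>V. g (THE r. r \<in> V \<and> (\<forall>v\<in>V. g r v = f v)) v = f v)"
proof -
  obtain B where B: "finite B" "span B = V" using fin by blast
  have "\<exists>!r. r \<in> V \<and> (\<forall>v\<in>V. g r v = f v)"
  proof -
    obtain r where "r \<in> V" "\<forall>v\<in>V. g r v = f v" using riesz_exists[OF bil sym pos B lf] by blast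
    moreover have "r' = r" if "r' \<in> V" "\<forall>v\<in>V. g r' v = f v" for r'
      using repr_unique[OF bil pos V that(1) \<open>r \<in> V\<close>] that(2) \<open>\<forall>v\<in>V. g r v = f v\<close> by simp
    ultimately show ?thesis by blast
  qed
  from theI'[OF this] show ?thesis .
qed

theorem mainTheorem4:
  fixes a :: "'a::real_inner \<Rightarrow> 'a \<Rightarrow> real"
    and V1 V2 :: "'a set" and \<tau> :: real and N :: nat
    and u1 u2 :: "nat \<Rightarrow> 'a"
  assumes a_bilinear: "bilinear a"
    and a_sym: "\<And>u v. a u v = a v u"
    and a_pos: "\<And>v. v \<noteq> 0 \<Longrightarrow> a v v > 0"
    and V1_sub: "subspace V1" and V2_sub: "subspace V2"
    and V1_fin: "\<exists>B. finite B \<and> span B = V1"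
    and V2_fin: "\<exists>B. finite B \<and> span B = V2"
    and orth: "\<And>x y. x \<in> V1 \<Longrightarrow> y \<in> V2 \<Longrightarrow> inner x y = 0"
    and tau_pos: "\<tau> > 0" and N_ge: "N \<ge> 2"
    and u1_in: "\<And>n. n \<le> N \<Longrightarrow> u1 n \<in> V1"
    and u2_in: "\<And>n. n \<le> N \<Longrightarrow> u2 n \<in> V2"
    and scheme1: "\<And>n w. 1 \<le> n \<Longrightarrow> n \<le> N - 1 \<Longrightarrow> w \<in> V1 \<Longrightarrow>
        inner (u1 (n+1) - 2 *\<^sub>R u1 n + u1 (n-1)) w
        + \<tau>^2 / 2 * a (u1 (n+1) + u1 (n-1) + 2 *\<^sub>R u2 n) w = 0"
    and scheme2: "\<And>n w. 1 \<le> n \<Longrightarrow> n \<le> N - 1 \<Longrightarrow> w \<in> V2 \<Longrightarrow>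
        inner (u2 (n+1) - 2 *\<^sub>R u2 n + u2 (n-1)) w
        + \<tau>^2 / 2 * a (u1 (n+1) + u1 (n-1) + 2 *\<^sub>R u2 n) w = 0"
  shows "(\<forall>n. 1 \<le> n \<and> n \<le> N - 1 \<longrightarrow>
            energy a \<tau> V1 u1 u2 n = energy a \<tau> V1 u1 u2 (n - 1))
       \<and> ((\<forall>v\<in>V2. v \<noteq> 0 \<longrightarrow> a v v / (norm v)^2 \<le> 2 / \<tau>^2) \<longrightarrow>
            (\<forall>n \<le> N - 1. \<forall>t \<in> set (E_terms a \<tau> V1 u1 u2 n).
                0 \<le> t \<and> t \<le> energy a \<tau> V1 u1 u2 0))"
proof -
  have bilm: "bilinear (mt_inner a \<tau>)" by (rule bilinear_mt[OF a_bilinear])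
  have msym: "\<And>u v. mt_inner a \<tau> u v = mt_inner a \<tau> v u"
    unfolding mt_inner_def using a_sym by (simp add: inner_commute)
  have mpos: "\<And>v. v \<noteq> 0 \<Longrightarrow> mt_inner a \<tau> v v > 0"
    unfolding mt_inner_def using a_pos tau_pos by (simp add: add_pos_pos)
  have lin_a: "linear (\<lambda>v. r * a u v)" for u r
    by (rule linearI) (simp_all add: bilinear_radd[OF a_bilinear] bilinear_rmul[OF a_bilinear] algebra_simps)
  have lin_i: "linear (\<lambda>v. inner u v)" for u
    by (rule linearI) (simp_all add: inner_add_right)
  have B: "b_op a \<tau> V1 u \<in> V1 \<and> (\<forall>v\<in>V1. mt_inner a \<tau> (b_op a \<tau> V1 u) v = inner u v)" for u
    unfolding b_op_def by (rule the_repr[OF bilm msym mpos V1_sub V1_fin lin_i])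
  have C: "c_op a \<tau> V1 u \<in> V1 \<and> (\<forall>v\<in>V1. mt_inner a \<tau> (c_op a \<tau> V1 u) v = \<tau>^2/2 * a u v)" for u
    unfolding c_op_def by (rule the_repr[OF bilm msym mpos V1_sub V1_fin lin_a])
  have D: "d_op a V1 u \<in> V1 \<and> (\<forall>v\<in>V1. a (d_op a V1 u) v = a u v)" for u
    unfolding d_op_def using the_repr[OF a_bilinear a_sym a_pos V1_sub V1_fin lin_a[of 1 u]] by simp
  interpret O: ops a \<tau> V1 "b_op a \<tau> V1" "c_op a \<tau> V1" "d_op a V1"
    by unfold_locales (use a_bilinear a_sym a_pos V1_sub tau_pos B C D in auto)
  have EF: "energy a \<tau> V1 u1 u2 n = O.F (u1 (n+1)) (u1 n) (u2 (n+1)) (u2 n)" if "n + 1 \<le> N" for n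
  proof -
    have "energy a \<tau> V1 u1 u2 n = sum_list (E_terms a \<tau> V1 u1 u2 n)" by (simp add: energy_def)
    also have "\<dots> = O.F (u1 (n+1)) (u1 n) (u2 (n+1)) (u2 n)"
      using O.terms_sum[OF u1_in[of n] u1_in[of "n+1"], of "u2 (n+1)" "u2 n"] that
      by (simp add: E_terms_def s_norm2_def n_norm2_def mt_norm2_def add.assoc)
    finally show ?thesis .
  qed
  have cons: "energy a \<tau> V1 u1 u2 n = energy a \<tau> V1 u1 u2 (n - 1)" if n: "1 \<le> n" "n \<le> N - 1" for n
  proof -
    have n1: "n - 1 + 1 = n" using n by simp
    have "energy a \<tau> V1 u1 u2 n = O.F (u1 (n+1)) (u1 n) (u2 (n+1)) (u2 n)" using EF n by simp
    also have "\<dots> = O.F (u1 n) (u1 (n-1)) (u2 n) (u2 (n-1))"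
    proof (rule O.conserv)
      show "u1 (n-1) \<in> V1" "u1 n \<in> V1" "u1 (n+1) \<in> V1" using u1_in n by auto
      show "\<And>w. w \<in> V1 \<Longrightarrow> inner (u1 (n+1) - 2 *\<^sub>R u1 n + u1 (n-1)) w
          + \<tau>^2/2 * a (u1 (n+1) + u1 (n-1) + 2 *\<^sub>R u2 n) w = 0"
        using scheme1 n by blast
      have "u2 (n+1) - u2 (n-1) \<in> V2" using u2_in n V2_sub by (simp add: subspace_diff)
      then show "inner (u2 (n+1) - 2 *\<^sub>R u2 n + u2 (n-1)) (u2 (n+1) - u2 (n-1))
          + \<tau>^2/2 * a (u1 (n+1) + u1 (n-1) + 2 *\<^sub>R u2 n) (u2 (n+1) - u2 (n-1)) = 0"
        using scheme2 n by blast
    qed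
    also have "\<dots> = energy a \<tau> V1 u1 u2 (n - 1)" using EF[of "n-1"] n n1 by simp
    finally show ?thesis .
  qed
  have E0: "energy a \<tau> V1 u1 u2 n = energy a \<tau> V1 u1 u2 0" if "n \<le> N - 1" for n
    using that
  proof (induction n)
    case 0 then show ?case by simp
  next
    case (Suc n)
    then show ?case using cons[of "Suc n"] by simp
  qed
  have stab: "\<forall>n \<le> N - 1. \<forall>t \<in> set (E_terms a \<tau> V1 u1 u2 n).
                0 \<le> t \<and> t \<le> energy a \<tau> V1 u1 u2 0"
    if cfl: "\<forall>v\<in>V2. v \<noteq> 0 \<longrightarrow> a v v / (norm v)^2 \<le> 2 / \<tau>^2"
  proof (intro allI impI ballI)
    fix n t assume n: "n \<le> N - 1" and t: "t \<in> set (E_terms a \<tau> V1 u1 u2 n)"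
    let ?b = "b_op a \<tau> V1" and ?c = "c_op a \<tau> V1" and ?d = "d_op a V1"
    define w where "w = ?b (u1 (n+1)) - ?c (u2 (n+1)) - ?b (u1 n) + ?c (u2 n)"
    define z where "z = u2 (n+1) - u2 n"
    have t1: "mt_inner a \<tau> w w \<ge> 0" using O.m_self[of w] O.a_nonneg[of w] tau_pos by simp
    have t2: "(norm z)^2 - \<tau>^2/2 * a z z \<ge> 0"
    proof (cases "z = 0")
      case True then show ?thesis by (simp add: O.a_simps)
    next
      case False
      have "z \<in> V2" unfolding z_def using u2_in n N_ge V2_sub by (simp add: subspace_diff)
      then have q: "a z z / (norm z)^2 \<le> 2 / \<tau>^2" using cfl False by blast
      have nz: "(norm z)^2 > 0" using False by simp
      then have "a z z \<le> 2 / \<tau>^2 * (norm z)^2" using q by (simp add: pos_divide_le_eq)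
      then have "\<tau>^2/2 * a z z \<le> \<tau>^2/2 * (2 / \<tau>^2 * (norm z)^2)"
        using tau_pos by (intro mult_left_mono) auto
      also have "\<dots> = (norm z)^2" using tau_pos by (simp add: field_simps)
      finally show ?thesis by simp
    qed
    have t3: "(norm v)^2 - mt_inner a \<tau> (?b v) (?b v) \<ge> 0" for v by (rule O.s_nonneg)
    have t4: "\<tau>^2/2 * a y y - mt_inner a \<tau> (?c y) (?c y) - ((norm (?d y))^2 - mt_inner a \<tau> (?b (?d y)) (?b (?d y))) \<ge> 0" for y
      by (rule O.n_nonneg)
    have ET: "E_terms a \<tau> V1 u1 u2 n = [mt_inner a \<tau> w w, (norm z)^2 - \<tau>^2/2 * a z z,
        s_norm2 a \<tau> V1 (u1 (n+1) + ?d (u2 (n+1))), n_norm2 a \<tau> V1 (u2 (n+1)),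
        s_norm2 a \<tau> V1 (u1 n + ?d (u2 n)), n_norm2 a \<tau> V1 (u2 n)]"
      unfolding E_terms_def w_def z_def mt_norm2_def by simp
    have nn: "\<forall>t\<in>set (E_terms a \<tau> V1 u1 u2 n). 0 \<le> t"
      unfolding ET s_norm2_def n_norm2_def mt_norm2_def using t1 t2 t3 t4 by auto
    have "energy a \<tau> V1 u1 u2 n = sum_list (E_terms a \<tau> V1 u1 u2 n)" by (simp add: energy_def)
    then have le: "t \<le> energy a \<tau> V1 u1 u2 n"
      using t nn unfolding ET by auto
    show "0 \<le> t \<and> t \<le> energy a \<tau> V1 u1 u2 0" using nn t le E0[OF n] by auto
  qed
  show ?thesis using cons stab by blast
qed

end
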